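(* Let $n\ge1$, $p$ a prime and $R\subsetneq E_n$. The $n$ vectors $\lambda^{(i)}_k$ ($1\le i\le h$, $1\le k\le g_i$) form a basis of $\mathbb{Q}^n$.
   Context: $E_n=\{1,\dots,n\}$, indices modulo $n$; $e_m$ ($m\in\mathbb{Z}$) the standard basis vectors of $\mathbb{Z}^n$ extended $n$-periodically. Write $E_n\setminus R=\{r_1,\dots,r_h\}$ ($h\ge1$) so that $r_{i+1}$ is the first element of $E_n\setminus R$ in the cyclic sequence $r_i+1,r_i+2,\dots$ (with $r_{h+1}=r_1$, $r_0=r_h$); let $g_i$ be the smallest positive integer with $r_{i-1}+g_i\equiv r_i\pmod n$. Define $\lambda^{(i)}_k=e_{r_i}+p^ke_{r_i-k}$ for $1\le k\le g_i-1$ and $\lambda^{(i)}_{g_i}=e_{r_i}-p^{g_i}e_{r_{i-1}}$. *)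

theory Defs
  imports Complex_Main "HOL-Computational_Algebra.Primes"
begin

text \<open>Vectors of Q^n are functions int => rat supported on E_n = {1..n}.
  Indices are taken modulo n, represented in {1..n}.\<close>

definition emod :: "nat \<Rightarrow> int \<Rightarrow> int" where
  "emod n m = (m - 1) mod int n + 1"

definition evec :: "nat \<Rightarrow> int \<Rightarrow> (int \<Rightarrow> rat)" where
  "evec n m = (\<lambda>j. if j = emod n m then 1 else 0)"

text \<open>For r in E_n - R: the gap g = smallest positive integer such that
  the previous element r' of E_n - R (cyclically) satisfies r' + g = r mod n,
  i.e. the smallest g > 0 with r - g mod n in E_n - R.\<close>
definition gap :: "nat \<Rightarrow> int set \<Rightarrow> int \<Rightarrow> nat" where
  "gap n R r = (LEAST g::nat. 0 < g \<and> emod n (r - int g) \<notin> R)"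

definition lam :: "nat \<Rightarrow> nat \<Rightarrow> int set \<Rightarrow> int \<Rightarrow> nat \<Rightarrow> (int \<Rightarrow> rat)" where
  "lam n p R r k =
     (if k < gap n R r
      then (\<lambda>j. evec n r j + (of_nat p) ^ k * evec n (r - int k) j)
      else (\<lambda>j. evec n r j - (of_nat p) ^ (gap n R r) * evec n (r - int (gap n R r)) j))"

definition lam_index :: "nat \<Rightarrow> int set \<Rightarrow> (int \<times> nat) set" where
  "lam_index n R = {(r, k). r \<in> {1..int n} - R \<and> 1 \<le> k \<and> k \<le> gap n R r}"

definition is_basis_Qn :: "nat \<Rightarrow> 'a set \<Rightarrow> ('a \<Rightarrow> (int \<Rightarrow> rat)) \<Rightarrow> bool" where
  "is_basis_Qn n I v \<longleftrightarrow> finite I \<and>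
     (\<forall>i\<in>I. \<forall>j. j \<notin> {1..int n} \<longrightarrow> v i j = 0) \<and>
     (\<forall>x::int \<Rightarrow> rat. (\<forall>j. j \<notin> {1..int n} \<longrightarrow> x j = 0) \<longrightarrow>
        (\<exists>!c::'a \<Rightarrow> rat. (\<forall>i. i \<notin> I \<longrightarrow> c i = 0) \<and>
                          x = (\<lambda>j. \<Sum>i\<in>I. c i * v i j)))"

end

theory Submission
  imports Defs "HOL-Library.Function_Algebras"
begin

lemma emod_range: "n \<ge> 1 \<Longrightarrow> 1 \<le> emod n m \<and> emod n m \<le> int n"
proof -
  assume "n \<ge> 1"
  then have "(m - 1) mod int n < int n" "0 \<le> (m - 1) mod int n" by simp_all
  then show ?thesis unfolding emod_def by simp
qed
  
lemma emod_id: "1 \<le> m \<Longrightarrow> m \<le> int n \<Longrightarrow> emod n m = m"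
  unfolding emod_def by (simp add: mod_pos_pos_trivial)

lemma emod_add_left: "emod n (emod n a + b) = emod n (a + b)"
proof -
  have "(((a - 1) mod int n + 1 + b) - 1) mod int n = ((a - 1) mod int n + b) mod int n" by simp
  also have "\<dots> = ((a - 1) + b) mod int n" by (simp add: mod_add_left_eq)
  finally show ?thesis unfolding emod_def by (simp add: algebra_simps)
qed

lemma emod_mod: "emod n a = emod n b \<longleftrightarrow> a mod int n = b mod int n"
proof -
  have "(a - 1) mod int n = (b - 1) mod int n \<longleftrightarrow> a mod int n = b mod int n"
    by (metis add_diff_cancel_right' diff_add_cancel mod_add_left_eq mod_diff_left_eq)
  then show ?thesis unfolding emod_def by simp
qed

lemma emod_mod_self: "emod n x mod int n = x mod int n"
  unfolding emod_def by (metis diff_add_cancel mod_add_left_eq)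

definition sc :: "rat \<Rightarrow> (int \<Rightarrow> rat) \<Rightarrow> (int \<Rightarrow> rat)" where
  "sc c f = (\<lambda>j. c * f j)"

interpretation FV: vector_space sc
  by unfold_locales (auto simp: sc_def algebra_simps fun_eq_iff)

lemma sum_fun_apply: "(\<Sum>a\<in>A. f a) j = (\<Sum>a\<in>A. f a j)"
  by (induction A rule: infinite_finite_induct) auto

context
  fixes n :: nat and R :: "int set"
  assumes n1: "n \<ge> 1" and RS: "R \<subset> {1..int n}"
begin

lemma ex_notR: obtains s0 where "s0 \<in> {1..int n}" "s0 \<notin> R"
  using RS by blast

lemma back_ex: "\<exists>g. 0 < g \<and> g \<le> n \<and> emod n (r - int g) \<notin> R"
proof -
  obtain s0 where s0: "s0 \<in> {1..int n}" "s0 \<notin> R" by (rule ex_notR)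
  define g where "g = nat (emod n (r - s0))"
  have gi: "int g = emod n (r - s0)" using emod_range[OF n1, of "r - s0"] g_def by simp
  have "(r - int g) mod int n = s0 mod int n"
    unfolding gi by (metis emod_mod_self mod_diff_right_eq diff_diff_eq2 diff_add_cancel add_diff_cancel_left')
  then have "emod n (r - int g) = s0" using emod_mod emod_id s0(1) by (metis atLeastAtMost_iff)
  then show ?thesis using gi emod_range[OF n1, of "r - s0"] s0 by (intro exI[of _ g]) auto
qed

lemma fwd_ex: "\<exists>t. 0 < t \<and> t \<le> n \<and> emod n (s + int t) \<notin> R"
proof -
  obtain s0 where s0: "s0 \<in> {1..int n}" "s0 \<notin> R" by (rule ex_notR)
  define g where "g = nat (emod n (s0 - s))"
  have gi: "int g = emod n (s0 - s)" using emod_range[OF n1, of "s0 - s"] g_def by simp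
  have "(s + int g) mod int n = s0 mod int n"
    unfolding gi by (metis emod_mod_self mod_add_right_eq add_diff_cancel_left' diff_add_cancel add.commute)
  then have "emod n (s + int g) = s0" using emod_mod emod_id s0(1) by (metis atLeastAtMost_iff)
  then show ?thesis using gi emod_range[OF n1, of "s0 - s"] s0 by (intro exI[of _ g]) auto
qed

lemma gap_props:
  shows "0 < gap n R r" "gap n R r \<le> n" "emod n (r - int (gap n R r)) \<notin> R"
    and "\<And>g. 0 < g \<Longrightarrow> g < gap n R r \<Longrightarrow> emod n (r - int g) \<in> R"
proof -
  obtain g0 where g0: "0 < g0" "g0 \<le> n" "emod n (r - int g0) \<notin> R" using back_ex by blast
  have L: "0 < gap n R r \<and> emod n (r - int (gap n R r)) \<notin> R"
    unfolding gap_def by (rule LeastI[of _ g0]) (use g0 in auto)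
  then show "0 < gap n R r" "emod n (r - int (gap n R r)) \<notin> R" by auto
  have "gap n R r \<le> g0" unfolding gap_def by (rule Least_le) (use g0 in auto)
  then show "gap n R r \<le> n" using g0 by simp
  show "emod n (r - int g) \<in> R" if "0 < g" "g < gap n R r" for g
    using not_less_Least[of g "\<lambda>g. 0 < g \<and> emod n (r - int g) \<notin> R"] that
    unfolding gap_def by auto
qed

definition nxt :: "int \<Rightarrow> nat" where
  "nxt s = (LEAST t. 0 < t \<and> emod n (s + int t) \<notin> R)"

lemma nxt_props:
  shows "0 < nxt s" "nxt s \<le> n" "emod n (s + int (nxt s)) \<notin> R"
    and "\<And>t. 0 < t \<Longrightarrow> t < nxt s \<Longrightarrow> emod n (s + int t) \<in> R"
proof -
  obtain g0 where g0: "0 < g0" "g0 \<le> n" "emod n (s + int g0) \<notin> R" using fwd_ex by blast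
  have L: "0 < nxt s \<and> emod n (s + int (nxt s)) \<notin> R"
    unfolding nxt_def by (rule LeastI[of _ g0]) (use g0 in auto)
  then show "0 < nxt s" "emod n (s + int (nxt s)) \<notin> R" by auto
  have "nxt s \<le> g0" unfolding nxt_def by (rule Least_le) (use g0 in auto)
  then show "nxt s \<le> n" using g0 by simp
  show "emod n (s + int t) \<in> R" if "0 < t" "t < nxt s" for t
    using not_less_Least[of t "\<lambda>t. 0 < t \<and> emod n (s + int t) \<notin> R"] that
    unfolding nxt_def by auto
qed

lemma phi_inv:
  assumes "(r, k) \<in> lam_index n R"
  shows "nxt (emod n (r - int k)) = k" "emod n (emod n (r - int k) + int k) = r"
proof -
  from assms have r: "r \<in> {1..int n}" "r \<notin> R" "1 \<le> k" "k \<le> gap n R r"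
    unfolding lam_index_def by auto
  have er: "emod n r = r" using r(1) emod_id by auto
  show "emod n (emod n (r - int k) + int k) = r" using er by (simp add: emod_add_left)
  show "nxt (emod n (r - int k)) = k"
    unfolding nxt_def
  proof (rule Least_equality)
    show "0 < k \<and> emod n (emod n (r - int k) + int k) \<notin> R" using r er by (simp add: emod_add_left)
    fix t :: nat assume t: "0 < t \<and> emod n (emod n (r - int k) + int t) \<notin> R"
    show "k \<le> t"
    proof (rule ccontr)
      assume "\<not> k \<le> t"
      then have "0 < k - t" "k - t < gap n R r" using t r by auto
      then have "emod n (r - int (k - t)) \<in> R" using gap_props(4) by blast
      moreover have "r - int (k - t) = r - int k + int t" using \<open>\<not> k \<le> t\<close> by simp
      ultimately have "emod n (r - int k + int t) \<in> R" by metis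
      then show False using t by (simp add: emod_add_left)
    qed
  qed
qed

lemma emod_diff_left: "emod n (emod n a - b) = emod n (a - b)"
  using emod_add_left[of n a "- b"] by simp

definition phi :: "int \<times> nat \<Rightarrow> int" where
  "phi = (\<lambda>(r, k). emod n (r - int k))"

lemma phi_inj: "inj_on phi (lam_index n R)"
proof (rule inj_onI)
  fix a b assume a: "a \<in> lam_index n R" and b: "b \<in> lam_index n R" and e: "phi a = phi b"
  obtain r k where ak: "a = (r, k)" by (cases a)
  obtain r' k' where bk: "b = (r', k')" by (cases b)
  have pa: "phi a = emod n (r - int k)" "phi b = emod n (r' - int k')" unfolding phi_def ak bk by simp_all
  have "k = nxt (phi a)" using phi_inv(1)[of r k] a ak pa by simp
  moreover have "k' = nxt (phi b)" using phi_inv(1)[of r' k'] b bk pa by simp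
  ultimately have "k = k'" using e by simp
  have r1: "r = emod n (phi a + int k)" using phi_inv(2)[of r k] a ak pa by simp
  have r2: "r' = emod n (phi b + int k')" using phi_inv(2)[of r' k'] b bk pa by simp
  have "r = r'" using r1 r2 e \<open>k = k'\<close> by simp
  then show "a = b" using ak bk \<open>k = k'\<close> by simp
qed

lemma phi_surj: "s \<in> {1..int n} \<Longrightarrow> (emod n (s + int (nxt s)), nxt s) \<in> lam_index n R
   \<and> phi (emod n (s + int (nxt s)), nxt s) = s"
proof -
  assume s: "s \<in> {1..int n}"
  define t where "t = nxt s"
  define r where "r = emod n (s + int t)"
  have r: "r \<in> {1..int n}" "r \<notin> R" using emod_range[OF n1] nxt_props(3) unfolding r_def t_def by auto
  have "t \<le> gap n R r"
  proof (rule ccontr)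
    assume "\<not> t \<le> gap n R r"
    then have "0 < t - gap n R r" "t - gap n R r < t" using gap_props(1)[of r] by auto
    then have "emod n (s + int (t - gap n R r)) \<in> R" using nxt_props(4) t_def by blast
    moreover have "s + int (t - gap n R r) = s + int t - int (gap n R r)" using \<open>\<not> t \<le> gap n R r\<close> by simp
    ultimately have "emod n (r - int (gap n R r)) \<in> R" unfolding r_def
      by (metis emod_diff_left)
    then show False using gap_props(3) by blast
  qed
  moreover have "1 \<le> t" using nxt_props(1) t_def by (simp add: Suc_le_eq)
  ultimately have "(r, t) \<in> lam_index n R" using r unfolding lam_index_def by auto
  moreover have "phi (r, t) = s" unfolding phi_def r_def using s by (simp add: emod_diff_left emod_id)
  ultimately show ?thesis unfolding r_def t_def by simp
qed

lemma phi_bij: "bij_betw phi (lam_index n R) {1..int n}"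
  unfolding bij_betw_def
proof (intro conjI phi_inj equalityI subsetI)
  fix x assume "x \<in> phi ` lam_index n R"
  then obtain a where "x = phi a" by blast
  then show "x \<in> {1..int n}" using emod_range[OF n1] unfolding phi_def by (simp split: prod.splits)
next
  fix s assume "s \<in> {1..int n}"
  then show "s \<in> phi ` lam_index n R" using phi_surj by (metis image_eqI)
qed

lemma card_I: "card (lam_index n R) = n" and finite_I: "finite (lam_index n R)"
proof -
  show "card (lam_index n R) = n" using bij_betw_same_card[OF phi_bij] by simp
  show "finite (lam_index n R)" using bij_betw_finite[OF phi_bij] by simp
qed

definition psi :: "int \<Rightarrow> int \<times> nat" where
  "psi s = (emod n (s + int (nxt s)), nxt s)"

lemma psi_in: "s \<in> {1..int n} \<Longrightarrow> psi s \<in> lam_index n R \<and> phi (psi s) = s"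
  using phi_surj unfolding psi_def by blast

lemma psi_phi: "a \<in> lam_index n R \<Longrightarrow> psi (phi a) = a"
  using phi_inv unfolding psi_def phi_def by (auto split: prod.splits)

lemma phi_range: "phi a \<in> {1..int n}"
  using emod_range[OF n1] unfolding phi_def by (simp split: prod.splits)

lemma sum_phi:
  assumes "s \<in> {1..int n}"
  shows "(\<Sum>a\<in>lam_index n R. if phi a = s then g a else 0) = g (psi s)"
proof -
  have "{a \<in> lam_index n R. phi a = s} = {psi s}"
    using psi_in[OF assms] psi_phi by auto
  then show ?thesis using sum.inter_filter[OF finite_I, of g "\<lambda>a. phi a = s"] by simp
qed

context
  fixes p :: nat
  assumes p2: "p \<ge> 2"
begin

definition lv :: "int \<times> nat \<Rightarrow> int \<Rightarrow> rat" where
  "lv = (\<lambda>(r, k). lam n p R r k)"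

definition wt :: "int \<times> nat \<Rightarrow> rat" where
  "wt = (\<lambda>(r, k). if k < gap n R r then of_nat p ^ k else - (of_nat p ^ gap n R r))"

lemma wt_nz: "wt a \<noteq> 0"
  using p2 unfolding wt_def by (auto split: prod.splits)

lemma lv_formula:
  assumes "a \<in> lam_index n R"
  shows "lv a j = (if j = fst a then 1 else 0) + wt a * (if j = phi a then 1 else 0)"
proof -
  obtain r k where a: "a = (r, k)" by (cases a)
  have r: "r \<in> {1..int n}" using assms a unfolding lam_index_def by auto
  have er: "emod n r = r" using r emod_id by auto
  show ?thesis unfolding a lv_def lam_def wt_def phi_def evec_def
    using er assms a unfolding lam_index_def by (auto simp: phi_def)
qed

lemma lv_support: "j \<notin> {1..int n} \<Longrightarrow> lv a j = 0"
  using emod_range[OF n1] unfolding lv_def lam_def evec_def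
  by (auto split: prod.splits)

lemma comb_eq:
  "(\<Sum>a\<in>lam_index n R. c a * lv a j) =
   (\<Sum>a\<in>lam_index n R. if j = fst a then c a else 0) +
   (\<Sum>a\<in>lam_index n R. if phi a = j then c a * wt a else 0)"
proof -
  have "(\<Sum>a\<in>lam_index n R. c a * lv a j) =
     (\<Sum>a\<in>lam_index n R. (if j = fst a then c a else 0) + (if phi a = j then c a * wt a else 0))"
    by (rule sum.cong) (auto simp: lv_formula algebra_simps)
  then show ?thesis by (simp add: sum.distrib)
qed

lemma fst_sum_R:
  assumes "s \<in> R"
  shows "(\<Sum>a\<in>lam_index n R. if s = fst a then c a else 0) = 0"
  by (rule sum.neutral) (use assms in \<open>auto simp: lam_index_def\<close>)

lemma fst_sum_notR:
  assumes "s \<in> {1..int n}" "s \<notin> R" and z: "\<And>k. (s, k) \<in> lam_index n R \<Longrightarrow> k < gap n R s \<Longrightarrow> c (s, k) = 0"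
  shows "(\<Sum>a\<in>lam_index n R. if s = fst a then c a else 0) = c (s, gap n R s)"
proof -
  have mem: "(s, gap n R s) \<in> lam_index n R"
    using assms gap_props(1)[of s] unfolding lam_index_def by (auto simp: Suc_le_eq)
  have "(\<Sum>a\<in>lam_index n R. if s = fst a then c a else 0) =
        (\<Sum>a\<in>lam_index n R. if a = (s, gap n R s) then c a else 0)"
  proof (rule sum.cong)
    fix a assume a: "a \<in> lam_index n R"
    obtain r k where ak: "a = (r, k)" by (cases a)
    have "k \<le> gap n R r" using a ak unfolding lam_index_def by auto
    then show "(if s = fst a then c a else 0) = (if a = (s, gap n R s) then c a else 0)"
      using z[of k] a ak by auto
  qed simp
  also have "\<dots> = c (s, gap n R s)" using mem finite_I by (simp add: sum.delta')
  finally show ?thesis .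
qed

lemma indep:
  assumes h: "\<And>j. j \<in> {1..int n} \<Longrightarrow> (\<Sum>a\<in>lam_index n R. c a * lv a j) = 0"
  shows "\<forall>a\<in>lam_index n R. c a = 0"
proof -
  have step1: "c (r, k) = 0" if rk: "(r, k) \<in> lam_index n R" "k < gap n R r" for r k
  proof -
    define s where "s = phi (r, k)"
    have k0: "0 < k" using rk unfolding lam_index_def by auto
    have sR: "s \<in> R" unfolding s_def phi_def using gap_props(4)[OF k0 rk(2)] by simp
    have s1: "s \<in> {1..int n}" using phi_range s_def by simp
    have ps: "psi s = (r, k)" using psi_phi[OF rk(1)] s_def by simp
    have "0 = (\<Sum>a\<in>lam_index n R. c a * lv a s)" using h[OF s1] by simp
    also have "\<dots> = c (psi s) * wt (psi s)"
      unfolding comb_eq fst_sum_R[OF sR] using sum_phi[OF s1, of "\<lambda>a. c a * wt a"] by simp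
    finally show ?thesis using wt_nz ps by simp
  qed
  have step2: "c (s, gap n R s) = of_nat p ^ gap n R (fst (psi s)) * c (psi s)"
    if s: "s \<in> {1..int n}" "s \<notin> R" for s
  proof -
    obtain r' k' where pk: "psi s = (r', k')" by (cases "psi s")
    have pin: "(r', k') \<in> lam_index n R" and phs: "phi (r', k') = s" using psi_in[OF s(1)] pk by auto
    have k0: "0 < k'" using pin unfolding lam_index_def by auto
    have "\<not> k' < gap n R r'"
    proof
      assume "k' < gap n R r'"
      then have "emod n (r' - int k') \<in> R" using gap_props(4)[OF k0] by blast
      then show False using phs s(2) unfolding phi_def by simp
    qed
    then have w: "wt (psi s) = - (of_nat p ^ gap n R r')" unfolding pk wt_def by simp
    have "0 = (\<Sum>a\<in>lam_index n R. c a * lv a s)" using h[OF s(1)] by simp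
    also have "\<dots> = c (s, gap n R s) + c (psi s) * wt (psi s)"
      unfolding comb_eq using sum_phi[OF s(1), of "\<lambda>a. c a * wt a"] fst_sum_notR[OF s, of c] step1
      by simp
    finally show ?thesis using w pk by (simp add: algebra_simps)
  qed
  define M where "M = Max ((\<lambda>a. \<bar>c a\<bar>) ` lam_index n R)"
  have Ine: "lam_index n R \<noteq> {}" using card_I n1 by auto
  have Mge: "\<bar>c a\<bar> \<le> M" if "a \<in> lam_index n R" for a
    unfolding M_def using that finite_I by (intro Max_ge) auto
  have "M \<in> (\<lambda>a. \<bar>c a\<bar>) ` lam_index n R"
    unfolding M_def using finite_I Ine by (intro Max_in) auto
  then obtain a0 where a0: "a0 \<in> lam_index n R" "\<bar>c a0\<bar> = M" by auto
  have "M = 0"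
  proof (rule ccontr)
    assume M0: "M \<noteq> 0"
    obtain r k where ak: "a0 = (r, k)" by (cases a0)
    have kg: "k \<le> gap n R r" and r: "r \<in> {1..int n}" "r \<notin> R" using a0 ak unfolding lam_index_def by auto
    have "\<not> k < gap n R r" using step1[of r k] a0 ak M0 by auto
    then have kg': "k = gap n R r" using kg by simp
    define s where "s = phi a0"
    have s1: "s \<in> {1..int n}" using phi_range s_def by simp
    have sR: "s \<notin> R" unfolding s_def ak phi_def using gap_props(3)[of r] kg' by simp
    have ps: "psi s = a0" using psi_phi[OF a0(1)] s_def by simp
    have e: "c (s, gap n R s) = of_nat p ^ gap n R r * c a0" using step2[OF s1 sR] ps ak by simp
    have mem: "(s, gap n R s) \<in> lam_index n R"
      using s1 sR gap_props(1)[of s] unfolding lam_index_def by (auto simp: Suc_le_eq)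
    have "(2::rat) \<le> of_nat p ^ gap n R r"
    proof -
      have "(2::rat) \<le> of_nat p" using p2 by simp
      also have "\<dots> \<le> of_nat p ^ gap n R r" using gap_props(1)[of r] p2
        by (metis One_nat_def Suc_leI of_nat_0_le_iff of_nat_1 of_nat_le_iff one_le_numeral order.trans power_increasing power_one_right)
      finally show ?thesis .
    qed
    then have "2 * \<bar>c a0\<bar> \<le> \<bar>c (s, gap n R s)\<bar>" unfolding e abs_mult
      by (intro mult_right_mono) auto
    moreover have "\<bar>c a0\<bar> > 0" using M0 a0 by auto
    ultimately show False using Mge[OF mem] a0 by linarith
  qed
  then show ?thesis using Mge by fastforce
qed

lemma lv_inj: "inj_on lv (lam_index n R)"
proof (rule inj_onI)
  fix a b assume a: "a \<in> lam_index n R" and b: "b \<in> lam_index n R" and e: "lv a = lv b"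
  show "a = b"
  proof (rule ccontr)
    assume ab: "a \<noteq> b"
    define c :: "int \<times> nat \<Rightarrow> rat" where "c x = (if x = a then 1 else if x = b then -1 else 0)" for x
    have "(\<Sum>x\<in>lam_index n R. c x * lv x j) = 0" for j
    proof -
      have "(\<Sum>x\<in>lam_index n R. c x * lv x j) =
            (\<Sum>x\<in>lam_index n R. (if x = a then lv a j else 0) - (if x = b then lv b j else 0))"
        by (rule sum.cong) (auto simp: c_def ab)
      also have "\<dots> = lv a j - lv b j" using a b finite_I by (simp add: sum_subtractf)
      finally show ?thesis using e by simp
    qed
    then have "c a = 0" using indep[of c] a by blast
    then show False unfolding c_def by simp
  qed
qed

lemma reindex:
  assumes "t \<subseteq> lv ` lam_index n R"
  shows "(\<Sum>a\<in>lam_index n R. (if lv a \<in> t then u (lv a) else 0) * lv a j) = (\<Sum>y\<in>t. u y * y j)"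
proof -
  have "(\<Sum>a\<in>lam_index n R. (if lv a \<in> t then u (lv a) else 0) * lv a j) =
        (\<Sum>a\<in>lam_index n R. if lv a \<in> t then u (lv a) * lv a j else 0)"
    by (rule sum.cong) auto
  also have "\<dots> = (\<Sum>a\<in>{a\<in>lam_index n R. lv a \<in> t}. u (lv a) * lv a j)"
    using sum.inter_filter[OF finite_I, of "\<lambda>a. u (lv a) * lv a j" "\<lambda>a. lv a \<in> t"] by simp
  also have "\<dots> = (\<Sum>y\<in>lv ` {a\<in>lam_index n R. lv a \<in> t}. u y * y j)"
    by (subst sum.reindex) (auto intro: inj_on_subset[OF lv_inj])
  also have "lv ` {a\<in>lam_index n R. lv a \<in> t} = t" using assms by auto
  finally show ?thesis .
qed

lemma V0_span:
  assumes "\<And>j. j \<notin> {1..int n} \<Longrightarrow> f j = 0"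
  shows "f \<in> FV.span (evec n ` {1..int n})"
proof -
  have "f = (\<Sum>m\<in>{1..int n}. sc (f m) (evec n m))"
  proof
    fix j
    have "(\<Sum>m\<in>{1..int n}. sc (f m) (evec n m)) j = (\<Sum>m\<in>{1..int n}. if j = m then f m else 0)"
      unfolding sum_fun_apply by (rule sum.cong) (auto simp: sc_def evec_def emod_id)
    also have "\<dots> = f j" using assms[of j] by (simp add: sum.delta)
    finally show "f j = (\<Sum>m\<in>{1..int n}. sc (f m) (evec n m)) j" by simp
  qed
  also have "\<dots> \<in> FV.span (evec n ` {1..int n})"
    by (intro FV.span_sum FV.span_scale FV.span_base) auto
  finally show ?thesis .
qed

lemma uniq:
  assumes "\<forall>i. i \<notin> lam_index n R \<longrightarrow> c1 i = 0" "\<forall>i. i \<notin> lam_index n R \<longrightarrow> c2 i = 0"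
    and "x = (\<lambda>j. \<Sum>i\<in>lam_index n R. c1 i * lv i j)" "x = (\<lambda>j. \<Sum>i\<in>lam_index n R. c2 i * lv i j)"
  shows "c1 = c2"
proof
  fix a
  have "(\<Sum>i\<in>lam_index n R. (c1 i - c2 i) * lv i j) = 0" for j
  proof -
    have "(\<Sum>i\<in>lam_index n R. (c1 i - c2 i) * lv i j) =
          (\<Sum>i\<in>lam_index n R. c1 i * lv i j) - (\<Sum>i\<in>lam_index n R. c2 i * lv i j)"
      by (simp add: sum_subtractf left_diff_distrib)
    then show ?thesis using fun_cong[OF assms(3), of j] fun_cong[OF assms(4), of j] by simp
  qed
  then have "\<forall>a\<in>lam_index n R. c1 a - c2 a = 0" by (intro indep) auto
  then show "c1 a = c2 a" using assms(1)[rule_format, of a] assms(2)[rule_format, of a]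
    by (cases "a \<in> lam_index n R") auto
qed

lemma in_span:
  assumes x0: "\<And>j. j \<notin> {1..int n} \<Longrightarrow> x j = 0"
  shows "x \<in> FV.span (lv ` lam_index n R)"
proof (rule ccontr)
  assume nx: "x \<notin> FV.span (lv ` lam_index n R)"
  let ?B = "lv ` lam_index n R"
  let ?E = "evec n ` {1..int n}"
  have indB: "FV.independent ?B"
    unfolding FV.independent_explicit_module
  proof (intro allI impI)
    fix t u w
    assume h1: "finite t" and h: "t \<subseteq> ?B" and sz: "(\<Sum>v\<in>t. sc (u v) v) = 0" and wt: "w \<in> t"
    define c where "c a = (if lv a \<in> t then u (lv a) else 0)" for a
    have "(\<Sum>a\<in>lam_index n R. c a * lv a j) = 0" for j
    proof -
      have "(\<Sum>a\<in>lam_index n R. c a * lv a j) = (\<Sum>y\<in>t. u y * y j)"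
        unfolding c_def using reindex h by blast
      also have "\<dots> = (\<Sum>v\<in>t. sc (u v) v) j" unfolding sum_fun_apply sc_def by simp
      finally show ?thesis using sz by simp
    qed
    then have "\<forall>a\<in>lam_index n R. c a = 0" by (intro indep) auto
    moreover obtain a where "a \<in> lam_index n R" "w = lv a" using h wt by auto
    ultimately show "u w = 0" using wt unfolding c_def by auto
  qed
  have xB: "x \<notin> ?B" using nx FV.span_base by blast
  have ind2: "FV.independent (insert x ?B)" using FV.independent_insert indB nx xB by simp
  have sub: "insert x ?B \<subseteq> FV.span ?E"
    using V0_span[OF x0] V0_span[of "lv _"] lv_support by auto
  have "card (insert x ?B) \<le> card ?E"
    using FV.independent_span_bound[OF _ ind2 sub] by simp
  also have "\<dots> \<le> card {1..int n}" by (rule card_image_le) simp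
  also have "\<dots> = n" by simp
  finally have "card (insert x ?B) \<le> n" .
  moreover have "card (insert x ?B) = Suc n"
    using xB finite_I card_image[OF lv_inj] card_I by simp
  ultimately show False by simp
qed

lemma basis_ctx: "is_basis_Qn n (lam_index n R) lv"
  unfolding is_basis_Qn_def
proof (intro conjI finite_I ballI allI impI)
  fix i j assume "i \<in> lam_index n R" "j \<notin> {1..int n}"
  then show "lv i j = 0" using lv_support by blast
next
  fix x :: "int \<Rightarrow> rat" assume x0: "\<forall>j. j \<notin> {1..int n} \<longrightarrow> x j = 0"
  then have "x \<in> FV.span (lv ` lam_index n R)" using in_span by blast
  then obtain t r where t: "finite t" "t \<subseteq> lv ` lam_index n R" "x = (\<Sum>a\<in>t. sc (r a) a)"
    unfolding FV.span_explicit by blast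
  define c0 where "c0 a = (if a \<in> lam_index n R then (if lv a \<in> t then r (lv a) else 0) else 0)" for a
  have P0: "(\<forall>i. i \<notin> lam_index n R \<longrightarrow> c0 i = 0) \<and> x = (\<lambda>j. \<Sum>i\<in>lam_index n R. c0 i * lv i j)"
  proof
    show "\<forall>i. i \<notin> lam_index n R \<longrightarrow> c0 i = 0" unfolding c0_def by simp
    show "x = (\<lambda>j. \<Sum>i\<in>lam_index n R. c0 i * lv i j)"
    proof
      fix j
      have "(\<Sum>i\<in>lam_index n R. c0 i * lv i j) =
            (\<Sum>i\<in>lam_index n R. (if lv i \<in> t then r (lv i) else 0) * lv i j)"
        by (rule sum.cong) (auto simp: c0_def)
      also have "\<dots> = (\<Sum>y\<in>t. r y * y j)" using reindex t(2) by blast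
      also have "\<dots> = x j" unfolding t(3) sum_fun_apply sc_def by simp
      finally show "x j = (\<Sum>i\<in>lam_index n R. c0 i * lv i j)" by simp
    qed
  qed
  show "\<exists>!c. (\<forall>i. i \<notin> lam_index n R \<longrightarrow> c i = 0) \<and> x = (\<lambda>j. \<Sum>i\<in>lam_index n R. c i * lv i j)"
    using P0 uniq by blast
qed

lemma main_ctx:
  "card (lam_index n R) = n \<and> inj_on (\<lambda>(r, k). lam n p R r k) (lam_index n R)
         \<and> is_basis_Qn n (lam_index n R) (\<lambda>(r, k). lam n p R r k)"
  using card_I lv_inj basis_ctx unfolding lv_def by simp

end

end

theorem mainTheorem6:
  fixes n p :: nat and R :: "int set"
  assumes "n \<ge> 1" and "prime p" and "R \<subset> {1..int n}"
  shows "card (lam_index n R) = n \<and> inj_on (\<lambda>(r, k). lam n p R r k) (lam_index n R)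
         \<and> is_basis_Qn n (lam_index n R) (\<lambda>(r, k). lam n p R r k)"
  using main_ctx[OF assms(1) assms(3) prime_ge_2_nat[OF assms(2)]] .

end
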